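(* Let $h$ be a hive all of whose flatspaces are small triangles or small rhombi, and let $G$ be its associated graph. If $h$ is a vertex (extreme point) of the polytope of all hives having the same border labels as $h$, then $G$ is acyclic (contains no cycle).
   Context: Fix $n\ge1$. Hive vertices: $H=\{(p,q)\in\mathbb{Z}^2:p,q\ge0,\ p+q\le n\}$, placed in the plane at $p(1,0)+q(1/2,\sqrt3/2)$, forming a big triangle subdivided into $n^2$ small unit triangles. A rhombus is the union of two small triangles sharing an edge; for integers $p,q\ge0$ with $p+q\le n-2$ the rhombus inequalities are $h(p+1,q)+h(p,q+1)\ge h(p,q)+h(p+1,q+1)$, $h(p+1,q)+h(p+1,q+1)\ge h(p,q+1)+h(p+2,q)$, $h(p,q+1)+h(p+1,q+1)\ge h(p+1,q)+h(p,q+2)$ (obtuse-vertex sum $\ge$ acute-vertex sum). A hive is $h:H\to\mathbb{R}$ satisfying all of them. Border $B$: vertices with $p=0$, $q=0$ or $p+q=n$; the set of hives with prescribed values on $B$ is a compact polytope. A rhombus is flat if equality holds. Flatspaces are the unions of small triangles in the classes of the equivalence relation generated by "share an edge and form a flat rhombus". Associated graph $G$ (defined when every flatspace is a small triangle or a small rhombus): $G$ has one (blue) vertex for each flatspace that is a small triangle, and one (red) vertex for each lattice edge that is a side of a flatspace; each blue vertex is joined to the three red vertices on the sides of its triangle, and for each rhombus flatspace, the red vertices on each pair of opposite sides of the rhombus are joined by an edge. *)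

theory Defs
  imports Complex_Main
begin

definition hive_vertices :: "nat \<Rightarrow> (nat \<times> nat) set" where
  "hive_vertices n = {(p, q). p + q \<le> n}"

definition hive_border :: "nat \<Rightarrow> (nat \<times> nat) set" where
  "hive_border n = {(p, q). p + q \<le> n \<and> (p = 0 \<or> q = 0 \<or> p + q = n)}"

definition is_hive :: "nat \<Rightarrow> (nat \<times> nat \<Rightarrow> real) \<Rightarrow> bool" where
  "is_hive n h \<longleftrightarrow> (\<forall>p q. p + q + 2 \<le> n \<longrightarrow>
       h (p+1, q) + h (p, q+1) \<ge> h (p, q) + h (p+1, q+1) \<and>
       h (p+1, q) + h (p+1, q+1) \<ge> h (p, q+1) + h (p+2, q) \<and>
       h (p, q+1) + h (p+1, q+1) \<ge> h (p+1, q) + h (p, q+2))"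

text \<open>The polytope of hives with the same border labels as b. Hives are functions on
  the hive vertices; they are represented as functions on nat \<times> nat that vanish
  outside the hive vertices.\<close>
definition hives_with_border :: "nat \<Rightarrow> (nat \<times> nat \<Rightarrow> real) \<Rightarrow> (nat \<times> nat \<Rightarrow> real) set" where
  "hives_with_border n b = {g. is_hive n g \<and> (\<forall>x\<in>hive_border n. g x = b x)
                                 \<and> (\<forall>x. x \<notin> hive_vertices n \<longrightarrow> g x = 0)}"

definition extreme_point_fun :: "('a \<Rightarrow> real) \<Rightarrow> ('a \<Rightarrow> real) set \<Rightarrow> bool" where
  "extreme_point_fun x S \<longleftrightarrow> x \<in> S \<and>
     (\<forall>a\<in>S. \<forall>b\<in>S. \<forall>t::real. a \<noteq> b \<and> 0 < t \<and> t < 1 \<longrightarrow>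
        x \<noteq> (\<lambda>i. (1 - t) * a i + t * b i))"

definition up_tri :: "nat \<Rightarrow> nat \<Rightarrow> (nat \<times> nat) set" where
  "up_tri p q = {(p, q), (p+1, q), (p, q+1)}"

definition down_tri :: "nat \<Rightarrow> nat \<Rightarrow> (nat \<times> nat) set" where
  "down_tri p q = {(p+1, q), (p, q+1), (p+1, q+1)}"

definition small_tris :: "nat \<Rightarrow> (nat \<times> nat) set set" where
  "small_tris n = {up_tri p q | p q. p + q + 1 \<le> n} \<union> {down_tri p q | p q. p + q + 2 \<le> n}"

text \<open>Two distinct small triangles sharing an edge form a rhombus; it is flat if the
  sum over the obtuse vertices (the shared edge) equals the sum over the acute ones.\<close>
definition flat_adj :: "nat \<Rightarrow> (nat \<times> nat \<Rightarrow> real) \<Rightarrow> (nat \<times> nat) set \<Rightarrow> (nat \<times> nat) set \<Rightarrow> bool" where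
  "flat_adj n h T1 T2 \<longleftrightarrow> T1 \<in> small_tris n \<and> T2 \<in> small_tris n \<and> card (T1 \<inter> T2) = 2 \<and>
     sum h (T1 \<inter> T2) = sum h ((T1 \<union> T2) - (T1 \<inter> T2))"

text \<open>Flatspaces: classes of the equivalence relation on small triangles generated by
  flat_adj; a flatspace is represented by the set of small triangles it is the union of.\<close>
definition flatspaces :: "nat \<Rightarrow> (nat \<times> nat \<Rightarrow> real) \<Rightarrow> (nat \<times> nat) set set set" where
  "flatspaces n h = (\<lambda>T. {T'. (T, T') \<in> {(A, B). flat_adj n h A B}\<^sup>*}) ` small_tris n"

definition is_small_triangle :: "nat \<Rightarrow> (nat \<times> nat) set set \<Rightarrow> bool" where
  "is_small_triangle n F \<longleftrightarrow> (\<exists>T\<in>small_tris n. F = {T})"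

definition is_small_rhombus :: "nat \<Rightarrow> (nat \<times> nat) set set \<Rightarrow> bool" where
  "is_small_rhombus n F \<longleftrightarrow> (\<exists>T1\<in>small_tris n. \<exists>T2\<in>small_tris n.
      card (T1 \<inter> T2) = 2 \<and> F = {T1, T2})"

definition sides :: "(nat \<times> nat) set set \<Rightarrow> (nat \<times> nat) set set" where
  "sides F = {e. card e = 2 \<and> (\<exists>T\<in>F. e \<subseteq> T) \<and>
                 \<not> (\<exists>T1\<in>F. \<exists>T2\<in>F. T1 \<noteq> T2 \<and> e \<subseteq> T1 \<inter> T2)}"

datatype gvert = Blue "(nat \<times> nat) set" | Red "(nat \<times> nat) set"

definition assoc_graph_vertices :: "nat \<Rightarrow> (nat \<times> nat \<Rightarrow> real) \<Rightarrow> gvert set" where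
  "assoc_graph_vertices n h =
     {Blue T | T. {T} \<in> flatspaces n h} \<union> {Red e | e F. F \<in> flatspaces n h \<and> e \<in> sides F}"

definition assoc_graph_edges :: "nat \<Rightarrow> (nat \<times> nat \<Rightarrow> real) \<Rightarrow> gvert set set" where
  "assoc_graph_edges n h =
     {{Blue T, Red e} | T e. {T} \<in> flatspaces n h \<and> e \<in> sides {T}} \<union>
     {{Red e1, Red e2} | e1 e2 T1 T2. {T1, T2} \<in> flatspaces n h \<and> T1 \<noteq> T2 \<and>
         e1 \<in> sides {T1, T2} \<and> e2 \<in> sides {T1, T2} \<and> e1 \<subseteq> T1 \<and> e2 \<subseteq> T2 \<and> e1 \<inter> e2 = {}}"

definition is_cycle :: "'v set set \<Rightarrow> 'v list \<Rightarrow> bool" where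
  "is_cycle E vs \<longleftrightarrow> length vs \<ge> 3 \<and> distinct vs \<and>
     (\<forall>i < length vs. {vs ! i, vs ! ((i + 1) mod length vs)} \<in> E)"

definition acyclic_graph :: "'v set set \<Rightarrow> bool" where
  "acyclic_graph E \<longleftrightarrow> \<not> (\<exists>vs. is_cycle E vs)"

end

theory Submission
  imports Defs
begin


lemma up_up:
  "u \<noteq> v \<Longrightarrow> u \<in> up_tri p q \<Longrightarrow> v \<in> up_tri p q \<Longrightarrow> u \<in> up_tri p' q' \<Longrightarrow> v \<in> up_tri p' q'
   \<Longrightarrow> p = p' \<and> q = q'"
  by (auto simp: up_tri_def)

lemma down_down:
  "u \<noteq> v \<Longrightarrow> u \<in> down_tri p q \<Longrightarrow> v \<in> down_tri p q \<Longrightarrow> u \<in> down_tri p' q' \<Longrightarrow> v \<in> down_tri p' q'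
   \<Longrightarrow> p = p' \<and> q = q'"
  by (auto simp: down_tri_def)

lemma up_down:
  "u \<noteq> v \<Longrightarrow> u \<in> up_tri p q \<Longrightarrow> v \<in> up_tri p q \<Longrightarrow> u \<in> down_tri p' q' \<Longrightarrow> v \<in> down_tri p' q'
   \<Longrightarrow> (p' = p \<and> q' = q) \<or> (p = Suc p' \<and> q' = q) \<or> (p' = p \<and> q = Suc q')"
  by (auto simp: up_tri_def down_tri_def)

definition det3 :: "nat \<times> nat \<Rightarrow> nat \<times> nat \<Rightarrow> nat \<times> nat \<Rightarrow> real" where
  "det3 u v z = (real (fst v) - real (fst u)) * (real (snd z) - real (snd u))
              - (real (snd v) - real (snd u)) * (real (fst z) - real (fst u))"

definition sig :: "(nat \<times> nat) set \<Rightarrow> nat \<times> nat \<Rightarrow> nat \<times> nat \<Rightarrow> real" where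
  "sig A u v = (\<Sum>z\<in>A. det3 u v z)"

lemma det3_swap: "det3 v u z = - det3 u v z"
  by (simp add: det3_def algebra_simps)

lemma det3_cyc: "det3 v z u = det3 u v z"
  by (simp add: det3_def algebra_simps)

lemma det3_u: "det3 u v u = 0" and det3_v: "det3 u v v = 0"
  by (simp_all add: det3_def)

lemma sig_swap: "sig A v u = - sig A u v"
  unfolding sig_def sum_negf[symmetric] by (rule sum.cong) (auto simp: det3_def algebra_simps)

lemma sig_tri: "u \<noteq> v \<Longrightarrow> v \<noteq> z \<Longrightarrow> u \<noteq> z \<Longrightarrow> sig {u,v,z} u v = det3 u v z"
  by (simp add: sig_def det3_u det3_v)

lemma sig_cyc: "u \<noteq> v \<Longrightarrow> v \<noteq> z \<Longrightarrow> u \<noteq> z \<Longrightarrow> T = {u,v,z} \<Longrightarrow> sig T v z = sig T u v"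
proof -
  assume a: "u \<noteq> v" "v \<noteq> z" "u \<noteq> z" "T = {u,v,z}"
  have "T = {v,z,u}" using a by auto
  then have "sig T v z = det3 v z u" using a sig_tri by metis
  also have "\<dots> = det3 u v z" by (rule det3_cyc)
  also have "\<dots> = sig T u v" using a sig_tri by metis
  finally show ?thesis .
qed

lemma small_tris_cases:
  assumes "T \<in> small_tris n"
  obtains p q where "T = up_tri p q" "p + q + 1 \<le> n"
    | p q where "T = down_tri p q" "p + q + 2 \<le> n"
  using assms unfolding small_tris_def by blast

lemma up_in: "p + q + 1 \<le> n \<Longrightarrow> up_tri p q \<in> small_tris n"
  unfolding small_tris_def by blast
lemma down_in: "p + q + 2 \<le> n \<Longrightarrow> down_tri p q \<in> small_tris n"
  unfolding small_tris_def by blast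

lemma card_up: "card (up_tri p q) = 3" by (simp add: up_tri_def)
lemma card_down: "card (down_tri p q) = 3" by (simp add: down_tri_def)

lemma small_card: "T \<in> small_tris n \<Longrightarrow> card T = 3 \<and> finite T"
  by (erule small_tris_cases) (auto simp: card_up card_down up_tri_def down_tri_def)

lemma small_sub: "T \<in> small_tris n \<Longrightarrow> T \<subseteq> hive_vertices n"
  by (erule small_tris_cases) (auto simp: up_tri_def down_tri_def hive_vertices_def)

lemma three_tris:
  assumes "A \<in> small_tris n" "B \<in> small_tris n" "C \<in> small_tris n"
    "A \<noteq> B" "A \<noteq> C" "B \<noteq> C" "u \<noteq> v" "u \<in> A" "v \<in> A" "u \<in> B" "v \<in> B" "u \<in> C" "v \<in> C"
  shows False
proof -
  have uu: "X = Y" if "X = up_tri p q" "Y = up_tri p' q'" "u \<in> X" "v \<in> X" "u \<in> Y" "v \<in> Y" for X Y p q p' q'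
  proof -
    have "p = p' \<and> q = q'" using up_up[of u v p q p' q'] that assms(7) by simp
    then show ?thesis using that by simp
  qed
  have dd: "X = Y" if "X = down_tri p q" "Y = down_tri p' q'" "u \<in> X" "v \<in> X" "u \<in> Y" "v \<in> Y" for X Y p q p' q'
  proof -
    have "p = p' \<and> q = q'" using down_down[of u v p q p' q'] that assms(7) by simp
    then show ?thesis using that by simp
  qed
  have t: "(\<exists>p q. X = up_tri p q) \<or> (\<exists>p q. X = down_tri p q)" if "X \<in> small_tris n" for X
    using that unfolding small_tris_def by blast
  show False
    using t[OF assms(1)] t[OF assms(2)] t[OF assms(3)]
  proof (elim disjE exE)
  qed (metis uu dd assms)+
qed

definition border_edge :: "nat \<Rightarrow> nat \<times> nat \<Rightarrow> nat \<times> nat \<Rightarrow> bool" where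
  "border_edge n u v \<longleftrightarrow> (snd u = 0 \<and> snd v = 0) \<or> (fst u = 0 \<and> fst v = 0)
      \<or> (fst u + snd u = n \<and> fst v + snd v = n)"

lemma sig_up: "sig (up_tri p q) u v = det3 u v (p,q) + det3 u v (Suc p, q) + det3 u v (p, Suc q)"
  by (simp add: sig_def up_tri_def)
lemma sig_down: "sig (down_tri p q) u v = det3 u v (Suc p,q) + det3 u v (p, Suc q) + det3 u v (Suc p, Suc q)"
  by (simp add: sig_def down_tri_def)


lemma adj_updown:
  assumes "u \<noteq> v" "u \<in> up_tri p q" "v \<in> up_tri p q" "u \<in> down_tri p' q'" "v \<in> down_tri p' q'"
    "p' + q' + 2 \<le> n"
  shows "up_tri p q \<inter> down_tri p' q' = {u,v} \<and> sig (down_tri p' q') u v = - sig (up_tri p q) u v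
     \<and> (sig (up_tri p q) u v = 1 \<or> sig (up_tri p q) u v = -1) \<and> \<not> border_edge n u v"
proof -
  consider "p' = p" "q' = q" | "p = Suc p'" "q' = q" | "p' = p" "q = Suc q'"
    using up_down[OF assms(1-5)] by blast
  then show ?thesis
  proof cases
    case 1
    then have "(u = (Suc p, q) \<and> v = (p, Suc q)) \<or> (u = (p, Suc q) \<and> v = (Suc p, q))"
      using assms(1-5) by (auto simp: up_tri_def down_tri_def)
    then show ?thesis using 1 assms(6)
      apply (elim disjE)
       apply (simp_all only: sig_up sig_down)
       apply (simp_all add: det3_def border_edge_def)
       apply (auto simp: up_tri_def down_tri_def)
      done
  next
    case 2
    then have "(u = (p, q) \<and> v = (p, Suc q)) \<or> (u = (p, Suc q) \<and> v = (p, q))"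
      using assms(1-5) by (auto simp: up_tri_def down_tri_def)
    then show ?thesis using 2 assms(6)
      apply (elim disjE)
       apply (simp_all only: sig_up sig_down)
       apply (simp_all add: det3_def border_edge_def)
       apply (auto simp: up_tri_def down_tri_def)
      done
  next
    case 3
    then have "(u = (p, q) \<and> v = (Suc p, q)) \<or> (u = (Suc p, q) \<and> v = (p, q))"
      using assms(1-5) by (auto simp: up_tri_def down_tri_def)
    then show ?thesis using 3 assms(6)
      apply (elim disjE)
       apply (simp_all only: sig_up sig_down)
       apply (simp_all add: det3_def border_edge_def)
       apply (auto simp: up_tri_def down_tri_def)
      done
  qed
qed


lemma adj:
  assumes "A \<in> small_tris n" "B \<in> small_tris n" "A \<noteq> B" "u \<noteq> v" "u \<in> A" "v \<in> A" "u \<in> B" "v \<in> B"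
  shows "A \<inter> B = {u,v} \<and> sig B u v = - sig A u v
     \<and> (sig A u v = 1 \<or> sig A u v = -1) \<and> \<not> border_edge n u v"
  using assms(1)
proof (cases rule: small_tris_cases)
  case (1 p q)
  show ?thesis using assms(2)
  proof (cases rule: small_tris_cases)
    case (1 p' q')
    then show ?thesis using up_up[of u v p q p' q'] assms \<open>A = up_tri p q\<close> by auto
  next
    case (2 p' q')
    then show ?thesis using adj_updown[of u v p q p' q' n] assms \<open>A = up_tri p q\<close> by auto
  qed
next
  case (2 p q)
  show ?thesis using assms(2)
  proof (cases rule: small_tris_cases)
    case (2 p' q')
    then show ?thesis using down_down[of u v p q p' q'] assms \<open>A = down_tri p q\<close> by auto
  next
    case (1 p' q')
    have "up_tri p' q' \<inter> down_tri p q = {u,v} \<and> sig (down_tri p q) u v = - sig (up_tri p' q') u v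
     \<and> (sig (up_tri p' q') u v = 1 \<or> sig (up_tri p' q') u v = -1) \<and> \<not> border_edge n u v"
      by (rule adj_updown) (use assms 1 2 in auto)
    then show ?thesis using 1 2 by (simp add: Int_commute) linarith
  qed
qed

definition chi :: "(nat \<times> nat) set \<Rightarrow> (nat \<times> nat) set \<Rightarrow> nat \<times> nat \<Rightarrow> nat \<times> nat \<Rightarrow> real" where
  "chi A B u v = (if A \<noteq> B \<and> A \<inter> B = {u,v} then sig A u v else 0)"

lemma chi_edge:
  assumes "A \<in> small_tris n" "B \<in> small_tris n" "T \<in> small_tris n" "A \<noteq> B" "A \<inter> B = {a,b}" "a \<noteq> b"
    "a \<in> T" "b \<in> T"
  shows "chi A B a b = sig T a b * ((if A = T then 1 else 0) - (if B = T then 1 else 0))"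
proof -
  have ab: "a \<in> A" "b \<in> A" "a \<in> B" "b \<in> B" using assms(5) by auto
  have "T = A \<or> T = B" using three_tris[OF assms(1,2,3) assms(4) _ _ assms(6) ab assms(7,8)] by blast
  then show ?thesis
  proof
    assume "T = A" then show ?thesis using assms by (simp add: chi_def)
  next
    assume "T = B" then show ?thesis using assms adj[OF assms(1,2,4,6) ab] by (simp add: chi_def)
  qed
qed

lemma chi_tri:
  assumes "A \<in> small_tris n" "B \<in> small_tris n" "T \<in> small_tris n" "A = B \<or> card (A \<inter> B) = 2"
    "T = {u,v,z}" "u \<noteq> v" "v \<noteq> z" "u \<noteq> z"
  shows "chi A B u v + chi A B v z + chi A B z u
         = sig T u v * ((if A = T then 1 else 0) - (if B = T then 1 else 0))"
proof (cases "A = B")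
  case True then show ?thesis by (simp add: chi_def)
next
  case False
  then have "card (A \<inter> B) = 2" using assms(4) by blast
  then obtain x y where xy: "x \<noteq> y" "A \<inter> B = {x,y}" by (auto simp: card_2_iff)
  have c1: "sig T v z = sig T u v" using sig_cyc assms(5-8) by blast
  have "T = {v,z,u}" using assms(5) by auto
  then have c2: "sig T z u = sig T u v" using sig_cyc[of v z u T] assms(6-8) c1 by auto
  consider "{x,y} = {u,v}" | "{x,y} = {v,z}" | "{x,y} = {z,u}" | "\<not> (x \<in> T \<and> y \<in> T)"
    using assms(5) xy(1) by auto
  then show ?thesis
  proof cases
    case 1
    have "chi A B u v = sig T u v * ((if A = T then 1 else 0) - (if B = T then 1 else 0))"
      by (rule chi_edge[OF assms(1-3) False]) (use xy 1 assms(5,6) in auto)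
    moreover have "chi A B v z = 0" "chi A B z u = 0" using xy 1 assms(6-8)
      by (auto simp: chi_def doubleton_eq_iff)
    ultimately show ?thesis by simp
  next
    case 2
    have "chi A B v z = sig T v z * ((if A = T then 1 else 0) - (if B = T then 1 else 0))"
      by (rule chi_edge[OF assms(1-3) False]) (use xy 2 assms(5,7) in auto)
    moreover have "chi A B u v = 0" "chi A B z u = 0" using xy 2 assms(6-8)
      by (auto simp: chi_def doubleton_eq_iff)
    ultimately show ?thesis using c1 by simp
  next
    case 3
    have "chi A B z u = sig T z u * ((if A = T then 1 else 0) - (if B = T then 1 else 0))"
      by (rule chi_edge[OF assms(1-3) False]) (use xy 3 assms(5,8) in auto)
    moreover have "chi A B u v = 0" "chi A B v z = 0" using xy 3 assms(6-8)
      by (auto simp: chi_def doubleton_eq_iff)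
    ultimately show ?thesis using c2 by simp
  next
    case 4
    have "A \<noteq> T" "B \<noteq> T" using 4 xy by auto
    moreover have "chi A B u v = 0" "chi A B v z = 0" "chi A B z u = 0" using xy 4 assms(5)
      by (auto simp: chi_def)
    ultimately show ?thesis by simp
  qed
qed

lemma sum_shift: "g L = g 0 \<Longrightarrow> (\<Sum>j<L. g (Suc j)) = (\<Sum>j<L. (g j :: real))"
proof -
  assume a: "g L = g 0"
  have "(\<Sum>j<Suc L. g j) = g 0 + (\<Sum>j<L. g (Suc j))" by (rule sum.lessThan_Suc_shift)
  moreover have "(\<Sum>j<Suc L. g j) = (\<Sum>j<L. g j) + g L" by simp
  ultimately show ?thesis using a by simp
qed

definition dd :: "(nat \<Rightarrow> (nat \<times> nat) set) \<Rightarrow> nat \<Rightarrow> nat \<times> nat \<Rightarrow> nat \<times> nat \<Rightarrow> real" where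
  "dd w L u v = (\<Sum>j<L. chi (w j) (w (Suc j)) u v)"

definition walk :: "nat \<Rightarrow> (nat \<Rightarrow> (nat \<times> nat) set) \<Rightarrow> nat \<Rightarrow> bool" where
  "walk n w L \<longleftrightarrow> (\<forall>j. w j \<in> small_tris n) \<and> (\<forall>j. w j = w (Suc j) \<or> card (w j \<inter> w (Suc j)) = 2)
     \<and> w L = w 0"

lemma dd_closed:
  assumes "walk n w L" "T \<in> small_tris n" "T = {u,v,z}" "u \<noteq> v" "v \<noteq> z" "u \<noteq> z"
  shows "dd w L u v + dd w L v z + dd w L z u = 0"
proof -
  let ?I = "\<lambda>j. (if w j = T then 1 else 0) :: real"
  have "dd w L u v + dd w L v z + dd w L z u
      = (\<Sum>j<L. chi (w j) (w (Suc j)) u v + chi (w j) (w (Suc j)) v z + chi (w j) (w (Suc j)) z u)"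
    by (simp add: dd_def sum.distrib)
  also have "\<dots> = (\<Sum>j<L. sig T u v * (?I j - ?I (Suc j)))"
    using assms chi_tri[of _ n _ T u v z] unfolding walk_def by (intro sum.cong) auto
  also have "\<dots> = sig T u v * ((\<Sum>j<L. ?I j) - (\<Sum>j<L. ?I (Suc j)))"
    by (simp add: sum_distrib_left sum_subtractf right_diff_distrib)
  also have "(\<Sum>j<L. ?I (Suc j)) = (\<Sum>j<L. ?I j)"
    by (rule sum_shift) (use assms(1) in \<open>simp add: walk_def\<close>)
  finally show ?thesis by simp
qed

lemma chi_swap: "chi A B v u = - chi A B u v"
  using sig_swap[of A u v] by (simp add: chi_def insert_commute)

lemma dd_swap: "dd w L v u = - dd w L u v"
  unfolding dd_def sum_negf[symmetric] by (rule sum.cong) (rule refl, rule chi_swap)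

lemma sig_same: "sig A u u = 0"
  by (simp add: sig_def det3_def)

lemma dd_same: "dd w L u u = 0"
  unfolding dd_def chi_def sig_same by simp

lemma dd_border:
  assumes "walk n w L" "border_edge n u v" "u \<noteq> v"
  shows "dd w L u v = 0"
  unfolding dd_def
proof (rule sum.neutral, rule ballI)
  fix j assume "j \<in> {..<L}"
  show "chi (w j) (w (Suc j)) u v = 0"
  proof (rule ccontr)
    assume "chi (w j) (w (Suc j)) u v \<noteq> 0"
    then have "w j \<noteq> w (Suc j)" "w j \<inter> w (Suc j) = {u,v}" by (auto simp: chi_def split: if_splits)
    then show False using adj[of "w j" n "w (Suc j)" u v] assms unfolding walk_def by auto
  qed
qed


definition ff :: "nat \<Rightarrow> (nat \<Rightarrow> (nat \<times> nat) set) \<Rightarrow> nat \<Rightarrow> nat \<times> nat \<Rightarrow> real" where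
  "ff n w L x = (if fst x + snd x \<le> n then (\<Sum>i<fst x. dd w L (i, snd x) (Suc i, snd x)) else 0)"

lemma ff_H: "Suc p + q \<le> n \<Longrightarrow> ff n w L (Suc p, q) - ff n w L (p, q) = dd w L (p, q) (Suc p, q)"
  by (simp add: ff_def)

lemma up_eq: "up_tri p q = {(p,q), (Suc p, q), (p, Suc q)}" by (simp add: up_tri_def)
lemma down_eq: "down_tri p q = {(Suc p, q), (Suc p, Suc q), (p, Suc q)}" by (auto simp: down_tri_def)

lemma ff_V: "walk n w L \<Longrightarrow> p + q + 1 \<le> n \<Longrightarrow>
   ff n w L (p, Suc q) - ff n w L (p, q) = dd w L (p, q) (p, Suc q)"
proof (induction p arbitrary: q)
  case 0
  have "dd w L (0, q) (0, Suc q) = 0" by (rule dd_border[OF 0(1)]) (auto simp: border_edge_def)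
  then show ?case by (simp add: ff_def)
next
  case (Suc p)
  have ih: "ff n w L (p, Suc q) - ff n w L (p, q) = dd w L (p, q) (p, Suc q)"
    using Suc by simp
  have c1: "dd w L (p,q) (Suc p, q) + dd w L (Suc p, q) (p, Suc q) + dd w L (p, Suc q) (p, q) = 0"
    by (rule dd_closed[OF Suc(2) up_in[of p q n]]) (use Suc(3) in \<open>auto simp: up_eq\<close>)
  have c2: "dd w L (Suc p,q) (Suc p, Suc q) + dd w L (Suc p, Suc q) (p, Suc q) + dd w L (p, Suc q) (Suc p, q) = 0"
    by (rule dd_closed[OF Suc(2) down_in[of p q n]]) (use Suc(3) in \<open>auto simp: down_eq\<close>)
  have h1: "ff n w L (Suc p, q) - ff n w L (p, q) = dd w L (p, q) (Suc p, q)"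
    by (rule ff_H) (use Suc(3) in simp)
  have h2: "ff n w L (Suc p, Suc q) - ff n w L (p, Suc q) = dd w L (p, Suc q) (Suc p, Suc q)"
    by (rule ff_H) (use Suc(3) in simp)
  have s1: "dd w L (p, Suc q) (p, q) = - dd w L (p, q) (p, Suc q)" by (rule dd_swap)
  have s2: "dd w L (Suc p, Suc q) (p, Suc q) = - dd w L (p, Suc q) (Suc p, Suc q)" by (rule dd_swap)
  have s3: "dd w L (p, Suc q) (Suc p, q) = - dd w L (Suc p, q) (p, Suc q)" by (rule dd_swap)
  show ?case using ih c1 c2 h1 h2 s1 s2 s3 by linarith
qed

lemma ff_D: "walk n w L \<Longrightarrow> p + q + 1 \<le> n \<Longrightarrow>
   ff n w L (p, Suc q) - ff n w L (Suc p, q) = dd w L (Suc p, q) (p, Suc q)"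
proof -
  assume a: "walk n w L" "p + q + 1 \<le> n"
  have c1: "dd w L (p,q) (Suc p, q) + dd w L (Suc p, q) (p, Suc q) + dd w L (p, Suc q) (p, q) = 0"
    by (rule dd_closed[OF a(1) up_in[of p q n]]) (use a(2) in \<open>auto simp: up_eq\<close>)
  have h1: "ff n w L (Suc p, q) - ff n w L (p, q) = dd w L (p, q) (Suc p, q)"
    by (rule ff_H) (use a(2) in simp)
  have v: "ff n w L (p, Suc q) - ff n w L (p, q) = dd w L (p, q) (p, Suc q)"
    by (rule ff_V[OF a])
  have s1: "dd w L (p, Suc q) (p, q) = - dd w L (p, q) (p, Suc q)" by (rule dd_swap)
  show ?thesis using c1 h1 v s1 by linarith
qed

lemma tri_exact_gen:
  fixes F :: "'a \<Rightarrow> real"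
  assumes "F b - F a = D a b" "F c - F a = D a c" "F c - F b = D b c"
    "D b a = - D a b" "D c a = - D a c" "D c b = - D b c" "D a a = 0" "D b b = 0" "D c c = 0"
    "u \<in> {a,b,c}" "v \<in> {a,b,c}"
  shows "F v - F u = D u v"
  using assms(10,11) apply simp
  apply (elim disjE; hypsubst)
  using assms(1-9) by linarith+

lemma ff_exact:
  assumes "walk n w L" "T \<in> small_tris n" "u \<in> T" "v \<in> T"
  shows "ff n w L v - ff n w L u = dd w L u v"
  using assms(2)
proof (cases rule: small_tris_cases)
  case (1 p q)
  have h: "ff n w L (Suc p, q) - ff n w L (p, q) = dd w L (p, q) (Suc p, q)"
    by (rule ff_H) (use 1 in simp)
  have v: "ff n w L (p, Suc q) - ff n w L (p, q) = dd w L (p, q) (p, Suc q)"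
    by (rule ff_V[OF assms(1)]) (use 1 in simp)
  have d: "ff n w L (p, Suc q) - ff n w L (Suc p, q) = dd w L (Suc p, q) (p, Suc q)"
    by (rule ff_D[OF assms(1)]) (use 1 in simp)
  show ?thesis
    by (rule tri_exact_gen[OF h v d dd_swap dd_swap dd_swap dd_same dd_same dd_same])
       (use assms(3,4) 1 in \<open>auto simp: up_eq\<close>)
next
  case (2 p q)
  have "ff n w L (Suc p, Suc q) - ff n w L (Suc p, q) = dd w L (Suc p, q) (Suc p, Suc q)"
  proof -
    have c2: "dd w L (Suc p,q) (Suc p, Suc q) + dd w L (Suc p, Suc q) (p, Suc q) + dd w L (p, Suc q) (Suc p, q) = 0"
      by (rule dd_closed[OF assms(1) down_in[of p q n]]) (use 2 in \<open>auto simp: down_eq\<close>)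
    have h2: "ff n w L (Suc p, Suc q) - ff n w L (p, Suc q) = dd w L (p, Suc q) (Suc p, Suc q)"
      by (rule ff_H) (use 2 in simp)
    have d: "ff n w L (p, Suc q) - ff n w L (Suc p, q) = dd w L (Suc p, q) (p, Suc q)"
      by (rule ff_D[OF assms(1)]) (use 2 in simp)
    have s2: "dd w L (Suc p, Suc q) (p, Suc q) = - dd w L (p, Suc q) (Suc p, Suc q)" by (rule dd_swap)
    have s3: "dd w L (p, Suc q) (Suc p, q) = - dd w L (Suc p, q) (p, Suc q)" by (rule dd_swap)
    show ?thesis using c2 h2 d s2 s3 by linarith
  qed
  moreover have h2: "ff n w L (Suc p, Suc q) - ff n w L (p, Suc q) = dd w L (p, Suc q) (Suc p, Suc q)"
    by (rule ff_H) (use 2 in simp)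
  moreover have d: "ff n w L (p, Suc q) - ff n w L (Suc p, q) = dd w L (Suc p, q) (p, Suc q)"
    by (rule ff_D[OF assms(1)]) (use 2 in simp)
  ultimately have h3: "ff n w L (p, Suc q) - ff n w L (Suc p, Suc q) = dd w L (Suc p, Suc q) (p, Suc q)"
    using dd_swap[of w L "(Suc p, Suc q)" "(p, Suc q)"] by linarith
  show ?thesis
    by (rule tri_exact_gen[OF \<open>ff n w L (Suc p, Suc q) - ff n w L (Suc p, q) = _\<close> d h3 dd_swap dd_swap dd_swap dd_same dd_same dd_same])
       (use assms(3,4) 2 in \<open>auto simp: down_eq\<close>)
qed

lemma ff_out: "x \<notin> hive_vertices n \<Longrightarrow> ff n w L x = 0"
  by (cases x) (simp add: ff_def hive_vertices_def)

lemma ff_bottom: "walk n w L \<Longrightarrow> p \<le> n \<Longrightarrow> ff n w L (p, 0) = 0"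
  unfolding ff_def by (auto intro!: sum.neutral dd_border simp: border_edge_def)

lemma ff_hyp: "walk n w L \<Longrightarrow> p + q = n \<Longrightarrow> ff n w L (p, q) = 0"
proof (induction q arbitrary: p)
  case 0 then show ?case using ff_bottom by simp
next
  case (Suc q)
  have "ff n w L (p, Suc q) - ff n w L (Suc p, q) = dd w L (Suc p, q) (p, Suc q)"
    by (rule ff_D) (use Suc in auto)
  moreover have "dd w L (Suc p, q) (p, Suc q) = 0"
    by (rule dd_border[OF Suc(2)]) (use Suc(3) in \<open>auto simp: border_edge_def\<close>)
  moreover have "ff n w L (Suc p, q) = 0" using Suc by simp
  ultimately show ?case by simp
qed

lemma ff_border: "walk n w L \<Longrightarrow> x \<in> hive_border n \<Longrightarrow> ff n w L x = 0"
proof -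
  assume a: "walk n w L" "x \<in> hive_border n"
  obtain p q where x: "x = (p,q)" by (cases x)
  then have "p + q \<le> n" "p = 0 \<or> q = 0 \<or> p + q = n" using a(2) by (auto simp: hive_border_def)
  then show ?thesis using x ff_bottom[OF a(1)] ff_hyp[OF a(1)] by (auto simp: ff_def)
qed


definition FR :: "nat \<Rightarrow> (nat \<times> nat \<Rightarrow> real) \<Rightarrow> ((nat \<times> nat) set \<times> (nat \<times> nat) set) set" where
  "FR n h = {(A, B). flat_adj n h A B}"

lemma FR_sym: "sym (FR n h)"
  unfolding sym_def FR_def flat_adj_def by (auto simp: Int_commute Un_commute)

lemma flatspaces_eq: "flatspaces n h = (\<lambda>T. {T'. (T, T') \<in> (FR n h)\<^sup>*}) ` small_tris n"
  unfolding flatspaces_def FR_def by simp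

lemma FR_small: "(A, B) \<in> (FR n h)\<^sup>* \<Longrightarrow> A \<in> small_tris n \<Longrightarrow> B \<in> small_tris n"
  by (induction rule: rtrancl_induct) (auto simp: FR_def flat_adj_def)

lemma fs_small: "F \<in> flatspaces n h \<Longrightarrow> T \<in> F \<Longrightarrow> T \<in> small_tris n"
  unfolding flatspaces_eq using FR_small by blast

lemma fs_class: "F \<in> flatspaces n h \<Longrightarrow> T \<in> F \<Longrightarrow> F = {T'. (T, T') \<in> (FR n h)\<^sup>*}"
proof -
  assume a: "F \<in> flatspaces n h" "T \<in> F"
  then obtain T0 where F: "F = {T'. (T0, T') \<in> (FR n h)\<^sup>*}" unfolding flatspaces_eq by blast
  then have t: "(T0, T) \<in> (FR n h)\<^sup>*" using a by blast
  have s: "sym ((FR n h)\<^sup>*)" by (rule sym_rtrancl[OF FR_sym])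
  then have "(T, T0) \<in> (FR n h)\<^sup>*" using t by (auto simp: sym_def)
  show ?thesis unfolding F
    using t \<open>(T, T0) \<in> _\<close> by (auto intro: rtrancl_trans)
qed

lemma fs_unique: "F1 \<in> flatspaces n h \<Longrightarrow> F2 \<in> flatspaces n h \<Longrightarrow> T \<in> F1 \<Longrightarrow> T \<in> F2 \<Longrightarrow> F1 = F2"
  using fs_class by metis

lemma fs_mem: "T \<in> small_tris n \<Longrightarrow> {T'. (T, T') \<in> (FR n h)\<^sup>*} \<in> flatspaces n h"
  unfolding flatspaces_eq by blast

lemma fs_adj: "flat_adj n h A B \<Longrightarrow> F \<in> flatspaces n h \<Longrightarrow> A \<in> F \<Longrightarrow> B \<in> F"
proof -
  assume a: "flat_adj n h A B" "F \<in> flatspaces n h" "A \<in> F"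
  have "(A, B) \<in> (FR n h)\<^sup>*" using a(1) by (auto simp: FR_def)
  then show ?thesis using fs_class[OF a(2,3)] by blast
qed

lemma sides_card: "e \<in> sides F \<Longrightarrow> card e = 2"
  by (simp add: sides_def)

lemma sides_tri: "e \<in> sides {T} \<Longrightarrow> e \<subseteq> T"
  by (auto simp: sides_def)

definition good :: "nat \<Rightarrow> (nat \<times> nat \<Rightarrow> real) \<Rightarrow> gvert \<Rightarrow> gvert \<Rightarrow> (nat \<times> nat) set \<Rightarrow> (nat \<times> nat) set \<Rightarrow> bool" where
  "good n h x y A B \<longleftrightarrow>
     (\<exists>e. {A} \<in> flatspaces n h \<and> B = A \<and> e \<in> sides {A} \<and> ((x = Blue A \<and> y = Red e) \<or> (x = Red e \<and> y = Blue A)))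
   \<or> (\<exists>e1 e2. {A, B} \<in> flatspaces n h \<and> A \<noteq> B \<and> e1 \<in> sides {A, B} \<and> e2 \<in> sides {A, B}
        \<and> e1 \<subseteq> A \<and> e2 \<subseteq> B \<and> e1 \<inter> e2 = {} \<and> x = Red e1 \<and> y = Red e2)"

lemma good_ex:
  assumes "{x, y} \<in> assoc_graph_edges n h" "x \<noteq> y"
  shows "\<exists>A B. good n h x y A B"
  using assms(1) unfolding assoc_graph_edges_def
proof (elim UnE CollectE exE conjE)
  fix T e assume a: "{x, y} = {Blue T, Red e}" "{T} \<in> flatspaces n h" "e \<in> sides {T}"
  then have "(x = Blue T \<and> y = Red e) \<or> (x = Red e \<and> y = Blue T)" by (auto simp: doubleton_eq_iff)
  then have "good n h x y T T" using a unfolding good_def by blast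
  then show ?thesis by blast
next
  fix e1 e2 T1 T2 assume a: "{x, y} = {Red e1, Red e2}" "{T1, T2} \<in> flatspaces n h" "T1 \<noteq> T2"
    "e1 \<in> sides {T1, T2}" "e2 \<in> sides {T1, T2}" "e1 \<subseteq> T1" "e2 \<subseteq> T2" "e1 \<inter> e2 = {}"
  then have "(x = Red e1 \<and> y = Red e2) \<or> (x = Red e2 \<and> y = Red e1)" by (auto simp: doubleton_eq_iff)
  then show ?thesis
  proof
    assume "x = Red e1 \<and> y = Red e2"
    then have "good n h x y T1 T2" using a unfolding good_def by blast
    then show ?thesis by blast
  next
    assume "x = Red e2 \<and> y = Red e1"
    moreover have "{T2, T1} = {T1, T2}" by auto
    ultimately have "good n h x y T2 T1" using a unfolding good_def by (metis Int_commute)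
    then show ?thesis by blast
  qed
qed

definition shapes_ok :: "nat \<Rightarrow> (nat \<times> nat \<Rightarrow> real) \<Rightarrow> bool" where
  "shapes_ok n h \<longleftrightarrow> (\<forall>F\<in>flatspaces n h. is_small_triangle n F \<or> is_small_rhombus n F)"

lemma rh_card:
  assumes "shapes_ok n h" "{A, B} \<in> flatspaces n h" "A \<noteq> B"
  shows "card (A \<inter> B) = 2"
proof -
  have "is_small_triangle n {A, B} \<or> is_small_rhombus n {A, B}" using assms unfolding shapes_ok_def by blast
  then show ?thesis
  proof
    assume "is_small_triangle n {A, B}" then show ?thesis using assms(3) by (auto simp: is_small_triangle_def)
  next
    assume "is_small_rhombus n {A, B}"
    then obtain T1 T2 where "card (T1 \<inter> T2) = 2" "{A, B} = {T1, T2}" by (auto simp: is_small_rhombus_def)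
    then show ?thesis using assms(3) by (auto simp: doubleton_eq_iff Int_commute)
  qed
qed

lemma good_small:
  assumes "shapes_ok n h" "good n h x y A B"
  shows "A \<in> small_tris n" "B \<in> small_tris n" "A = B \<or> card (A \<inter> B) = 2"
  using assms(2) fs_small[of _ n h] rh_card[OF assms(1)] unfolding good_def by blast+

lemma good_blue_y: "good n h x (Blue T) A B \<Longrightarrow> B = T"
  unfolding good_def by auto
lemma good_blue_x: "good n h (Blue T) y A B \<Longrightarrow> A = T"
  unfolding good_def by auto
lemma good_red_y: "good n h x (Red e) A B \<Longrightarrow> e \<subseteq> B \<and> card e = 2"
  unfolding good_def using sides_tri sides_card by blast
lemma good_red_x: "good n h (Red e) y A B \<Longrightarrow> e \<subseteq> A \<and> card e = 2"
  unfolding good_def using sides_tri sides_card by blast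

lemma inter2:
  assumes "A \<in> small_tris n" "B \<in> small_tris n" "A \<noteq> B" "card e = 2" "e \<subseteq> A" "e \<subseteq> B"
  shows "A \<inter> B = e"
proof -
  obtain u v where "e = {u,v}" "u \<noteq> v" using assms(4) by (auto simp: card_2_iff)
  then show ?thesis using adj[OF assms(1-3), of u v] assms(5,6) by auto
qed


locale cyc =
  fixes n :: nat and h :: "nat \<times> nat \<Rightarrow> real" and vs :: "gvert list"
  assumes shp: "shapes_ok n h"
    and cy: "is_cycle (assoc_graph_edges n h) vs"
begin

abbreviation "m \<equiv> length vs"

definition ABm :: "nat \<Rightarrow> (nat \<times> nat) set \<times> (nat \<times> nat) set" where
  "ABm k = (SOME P. good n h (vs ! k) (vs ! (Suc k mod m)) (fst P) (snd P))"

definition ww :: "nat \<Rightarrow> (nat \<times> nat) set" where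
  "ww j = (if even j then fst (ABm ((j div 2) mod m)) else snd (ABm ((j div 2) mod m)))"

lemma m3: "3 \<le> m" and dist: "distinct vs"
  using cy by (auto simp: is_cycle_def)

lemma mpos: "0 < m" using m3 by linarith
lemma vs_ne: "vs \<noteq> []" using mpos by auto

lemma edge: "k < m \<Longrightarrow> {vs ! k, vs ! (Suc k mod m)} \<in> assoc_graph_edges n h"
  using cy by (auto simp: is_cycle_def)

lemma suc_neq: "k < m \<Longrightarrow> Suc k mod m \<noteq> k"
  using m3 by (cases "Suc k < m") (auto simp: mod_if)

lemma vs_neq: "k < m \<Longrightarrow> vs ! k \<noteq> vs ! (Suc k mod m)"
proof -
  assume k: "k < m"
  have "Suc k mod m < m" using mpos by simp
  then show ?thesis using nth_eq_iff_index_eq[OF dist k] suc_neq[OF k] by auto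
qed

lemma good_AB: "k < m \<Longrightarrow> good n h (vs ! k) (vs ! (Suc k mod m)) (fst (ABm k)) (snd (ABm k))"
proof -
  assume k: "k < m"
  obtain A B where "good n h (vs ! k) (vs ! (Suc k mod m)) A B" using good_ex[OF edge[OF k] vs_neq[OF k]] by blast
  then have "\<exists>P. good n h (vs ! k) (vs ! (Suc k mod m)) (fst P) (snd P)" by (metis fst_conv snd_conv)
  then show ?thesis unfolding ABm_def by (rule someI_ex)
qed

lemma walk: "walk n ww (2 * m)"
  unfolding walk_def
proof (intro conjI allI)
  fix j
  have mp: "0 < m" by (rule mpos)
  show "ww j \<in> small_tris n"
    using good_small(1,2)[OF shp good_AB] mp unfolding ww_def by simp
  show "ww j = ww (Suc j) \<or> card (ww j \<inter> ww (Suc j)) = 2"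
  proof (cases "even j")
    case True
    then have "ww j = fst (ABm ((j div 2) mod m))" "ww (Suc j) = snd (ABm ((j div 2) mod m))"
      by (auto simp: ww_def)
    then show ?thesis using good_small(3)[OF shp good_AB] mp by simp
  next
    case False
    define i where "i = (j div 2) mod m"
    have i: "i < m" using mp by (simp add: i_def)
    have w1: "ww j = snd (ABm i)" using False by (simp add: ww_def i_def)
    have "Suc j div 2 = Suc (j div 2)" using False by presburger
    then have w2: "ww (Suc j) = fst (ABm (Suc i mod m))" using False
      by (simp add: ww_def i_def mod_Suc_eq)
    have g1: "good n h (vs ! i) (vs ! (Suc i mod m)) (fst (ABm i)) (snd (ABm i))" by (rule good_AB[OF i])
    have g2: "good n h (vs ! (Suc i mod m)) (vs ! (Suc (Suc i mod m) mod m)) (fst (ABm (Suc i mod m))) (snd (ABm (Suc i mod m)))"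
      by (rule good_AB, rule mod_less_divisor, rule mp)
    show ?thesis
    proof (cases "vs ! (Suc i mod m)")
      case (Blue T)
      then show ?thesis using good_blue_y[of n h _ T] good_blue_x[of n h T] g1 g2 w1 w2 by metis
    next
      case (Red e)
      have "e \<subseteq> snd (ABm i)" "card e = 2" using good_red_y g1 Red by metis+
      moreover have "e \<subseteq> fst (ABm (Suc i mod m))" using good_red_x g2 Red by metis
      moreover have "snd (ABm i) \<in> small_tris n" "fst (ABm (Suc i mod m)) \<in> small_tris n"
        using good_small(1,2)[OF shp] g1 g2 by metis+
      ultimately show ?thesis using inter2[of "snd (ABm i)" n "fst (ABm (Suc i mod m))" e] w1 w2 by auto
    qed
  qed
next
  show "ww (2 * m) = ww 0" using vs_ne by (auto simp: ww_def)
qed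

end


lemma two_sub:
  assumes "finite X" "card X = 3" "card a = 2" "card b = 2" "a \<subseteq> X" "b \<subseteq> X" "a \<noteq> b"
  shows "a \<union> b = X"
proof -
  have fa: "finite a" "finite b" using assms(1,5,6) finite_subset by auto
  have "\<not> b \<subseteq> a" using card_subset_eq[OF fa(1)] assms(3,4,7) by metis
  then have "a \<subset> a \<union> b" by auto
  then have "card a < card (a \<union> b)" using fa by (intro psubset_card_mono) auto
  moreover have "card (a \<union> b) \<le> card X" using assms(1,5,6) by (intro card_mono) auto
  ultimately have "card (a \<union> b) = card X" using assms(2,3) by linarith
  then show ?thesis using card_subset_eq[OF assms(1)] assms(5,6) by blast
qed

lemma good_pair_neq:
  assumes shp: "shapes_ok n h" and g1: "good n h x (Red e) B2 T" and g2: "good n h (Red e) z T A2"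
    and xz: "x \<noteq> z"
  shows False
proof -
  have c1: "({B2} \<in> flatspaces n h \<and> T = B2 \<and> x = Blue B2)
     \<or> (\<exists>e1. {B2, T} \<in> flatspaces n h \<and> B2 \<noteq> T \<and> e1 \<in> sides {B2, T} \<and> e \<in> sides {B2, T}
        \<and> e1 \<subseteq> B2 \<and> e \<subseteq> T \<and> e1 \<inter> e = {} \<and> x = Red e1)"
    using g1 unfolding good_def by auto
  have c2: "({T} \<in> flatspaces n h \<and> A2 = T \<and> z = Blue T)
     \<or> (\<exists>e4. {T, A2} \<in> flatspaces n h \<and> T \<noteq> A2 \<and> e \<in> sides {T, A2} \<and> e4 \<in> sides {T, A2}
        \<and> e \<subseteq> T \<and> e4 \<subseteq> A2 \<and> e \<inter> e4 = {} \<and> z = Red e4)"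
    using g2 unfolding good_def by auto
  show False using c1
  proof (elim disjE exE conjE)
    assume a1: "{B2} \<in> flatspaces n h" "T = B2" "x = Blue B2"
    show False using c2
    proof (elim disjE exE conjE)
      assume "z = Blue T" then show False using a1 xz by simp
    next
      fix e4 assume "{T, A2} \<in> flatspaces n h" "T \<noteq> A2"
      then show False using fs_unique[of "{T}" n h "{T, A2}" T] a1 by auto
    qed
  next
    fix e1 assume a1: "{B2, T} \<in> flatspaces n h" "B2 \<noteq> T" "e1 \<in> sides {B2, T}" "e \<in> sides {B2, T}"
        "e1 \<subseteq> B2" "e \<subseteq> T" "e1 \<inter> e = {}" "x = Red e1"
    show False using c2
    proof (elim disjE exE conjE)
      assume "{T} \<in> flatspaces n h"
      then show False using fs_unique[of "{T}" n h "{B2, T}" T] a1 by auto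
    next
      fix e4 assume a2: "{T, A2} \<in> flatspaces n h" "T \<noteq> A2" "e \<in> sides {T, A2}" "e4 \<in> sides {T, A2}"
        "e \<subseteq> T" "e4 \<subseteq> A2" "e \<inter> e4 = {}" "z = Red e4"
      have "{B2, T} = {T, A2}" using fs_unique[of "{B2, T}" n h "{T, A2}" T] a1 a2 by auto
      then have B2: "B2 = A2" using a1(2) by (auto simp: doubleton_eq_iff)
      have sm: "A2 \<in> small_tris n" "T \<in> small_tris n" using fs_small a2(1) by blast+
      have cA: "card A2 = 3" "finite A2" "card T = 3" "finite T" using small_card sm by blast+
      have ce: "card e = 2" "card e1 = 2" "card e4 = 2" using sides_card a1(3) a2(3,4) by blast+
      have "e1 \<noteq> e4" using xz a1(8) a2(8) by auto
      then have U: "e1 \<union> e4 = A2" using two_sub[OF cA(2,1) ce(2,3)] a1(5) a2(6) B2 by blast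
      then have "e \<inter> A2 = {}" using a1(7) a2(7) by auto
      then have "e \<subseteq> T - A2" using a2(5) by auto
      moreover have "card (T \<inter> A2) = 2" using rh_card[OF shp a2(1,2)] .
      then have "card (T - A2) = 1" using cA by (simp add: card_Diff_subset_Int)
      ultimately have "card e \<le> 1" using cA by (metis card_mono finite_Diff)
      then show False using ce by simp
    qed
  qed
qed


context cyc begin

lemma ww_even: "ww (2 * i) = fst (ABm (i mod m))" by (simp add: ww_def)
lemma ww_odd: "ww (Suc (2 * i)) = snd (ABm (i mod m))" by (simp add: ww_def)
lemma ww_odd2: "ww (Suc (Suc (2 * i))) = fst (ABm (Suc i mod m))"
proof -
  have "Suc (Suc (2 * i)) = 2 * Suc i" by simp
  then show ?thesis by (simp only: ww_even)
qed

lemma chi_even_zero: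
  assumes "F \<in> flatspaces n h" "{u, v} \<in> sides F" "u \<noteq> v"
  shows "chi (ww (2 * i)) (ww (Suc (2 * i))) u v = 0"
proof (rule ccontr)
  let ?A = "fst (ABm (i mod m))" and ?B = "snd (ABm (i mod m))"
  assume "chi (ww (2 * i)) (ww (Suc (2 * i))) u v \<noteq> 0"
  then have ne: "?A \<noteq> ?B" and AB: "?A \<inter> ?B = {u, v}"
    by (auto simp: chi_def ww_even ww_odd split: if_splits)
  have g: "good n h (vs ! (i mod m)) (vs ! (Suc (i mod m) mod m)) ?A ?B" by (rule good_AB) (simp add: vs_ne)
  then have fAB: "{?A, ?B} \<in> flatspaces n h" using ne unfolding good_def by auto
  have sm: "?A \<in> small_tris n" "?B \<in> small_tris n" using good_small[OF shp g] by auto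
  obtain T where T: "T \<in> F" "{u, v} \<subseteq> T" using assms(2) by (auto simp: sides_def)
  have smT: "T \<in> small_tris n" using fs_small assms(1) T(1) by blast
  have "T = ?A \<or> T = ?B"
    using three_tris[OF sm smT ne _ _ assms(3)] T(2) AB by blast
  then have "F = {?A, ?B}" using fs_unique[OF assms(1) fAB] T(1) by blast
  then show False using assms(2) ne AB unfolding sides_def by auto
qed

lemma chi_odd_red:
  assumes "chi (ww (Suc (2 * i))) (ww (Suc (Suc (2 * i)))) u v \<noteq> 0" "u \<noteq> v"
  shows "vs ! (Suc i mod m) = Red {u, v}"
proof -
  let ?i = "i mod m"
  let ?A = "snd (ABm ?i)" and ?B = "fst (ABm (Suc i mod m))"
  have ne: "?A \<noteq> ?B" and AB: "?A \<inter> ?B = {u, v}"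
    using assms(1) by (auto simp: chi_def ww_odd ww_odd2 split: if_splits)
  have e1: "Suc ?i mod m = Suc i mod m" by (simp add: mod_Suc_eq)
  have g1: "good n h (vs ! ?i) (vs ! (Suc i mod m)) (fst (ABm ?i)) ?A"
    using good_AB[of ?i] mpos e1 by simp
  have g2: "good n h (vs ! (Suc i mod m)) (vs ! (Suc (Suc i mod m) mod m)) ?B (snd (ABm (Suc i mod m)))"
    by (rule good_AB, rule mod_less_divisor, rule mpos)
  show ?thesis
  proof (cases "vs ! (Suc i mod m)")
    case (Blue T)
    then have "?A = T" "?B = T" using good_blue_y g1 good_blue_x g2 by metis+
    then show ?thesis using ne by simp
  next
    case (Red e)
    then have "e \<subseteq> ?A" "card e = 2" "e \<subseteq> ?B" using good_red_y g1 good_red_x g2 by metis+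
    then have "e \<subseteq> {u, v}" using AB by auto
    moreover have "card {u, v} = 2" using assms(2) by simp
    ultimately have "e = {u, v}" using \<open>card e = 2\<close> by (metis card_subset_eq finite.emptyI finite_insert)
    then show ?thesis using Red by simp
  qed
qed

lemma idx: "i < m \<Longrightarrow> Suc i mod m = k \<Longrightarrow> i = (k + m - 1) mod m"
proof -
  assume a: "i < m" "Suc i mod m = k"
  show ?thesis
  proof (cases "Suc i < m")
    case True
    then have "k = Suc i" using a by simp
    then have "k + m - 1 = i + m" by simp
    then show ?thesis using a by simp
  next
    case False
    then have "Suc i = m" using a by simp
    then have "k = 0" using a by simp
    then show ?thesis using \<open>Suc i = m\<close> by simp
  qed
qed

lemma idx2: "k < m \<Longrightarrow> Suc ((k + m - 1) mod m) mod m = k"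
proof -
  assume k: "k < m"
  have "Suc ((k + m - 1) mod m) mod m = Suc (k + m - 1) mod m" by (simp add: mod_Suc_eq)
  also have "Suc (k + m - 1) = k + m" using vs_ne by simp
  finally show ?thesis using k by simp
qed

lemma dd_not_in:
  assumes "F \<in> flatspaces n h" "{u, v} \<in> sides F" "u \<noteq> v" "Red {u, v} \<notin> set vs"
  shows "dd ww (2 * m) u v = 0"
  unfolding dd_def
proof (rule sum.neutral, rule ballI)
  fix j assume j: "j \<in> {..<2 * m}"
  show "chi (ww j) (ww (Suc j)) u v = 0"
  proof (cases "even j")
    case True
    define i where "i = j div 2"
    have "j = 2 * i" using True unfolding i_def by presburger
    then show ?thesis using chi_even_zero[OF assms(1-3), of i] by simp
  next
    case False
    define i where "i = j div 2"
    have ji: "j = Suc (2 * i)" using False unfolding i_def by presburger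
    show ?thesis
    proof (rule ccontr)
      assume "chi (ww j) (ww (Suc j)) u v \<noteq> 0"
      then have "vs ! (Suc i mod m) = Red {u, v}" using chi_odd_red assms(3) ji by blast
      moreover have "Suc i mod m < m" using vs_ne by simp
      ultimately have "Red {u, v} \<in> set vs" by (metis nth_mem)
      then show False using assms(4) by blast
    qed
  qed
qed

lemma dd_in:
  assumes "F \<in> flatspaces n h" "{u, v} \<in> sides F" "u \<noteq> v" "k < m" "vs ! k = Red {u, v}"
  shows "dd ww (2 * m) u v = chi (snd (ABm ((k + m - 1) mod m))) (fst (ABm k)) u v"
proof -
  let ?i0 = "(k + m - 1) mod m"
  let ?j0 = "Suc (2 * ?i0)"
  have i0: "?i0 < m" using vs_ne by simp
  have j0: "?j0 \<in> {..<2 * m}" using i0 by simp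
  have z: "chi (ww j) (ww (Suc j)) u v = 0" if j: "j \<in> {..<2 * m} - {?j0}" for j
  proof (cases "even j")
    case True
    define i where "i = j div 2"
    have "j = 2 * i" using True unfolding i_def by presburger
    then show ?thesis using chi_even_zero[OF assms(1-3), of i] by simp
  next
    case False
    define i where "i = j div 2"
    have ji: "j = Suc (2 * i)" using False unfolding i_def by presburger
    show ?thesis
    proof (rule ccontr)
      assume "chi (ww j) (ww (Suc j)) u v \<noteq> 0"
      then have "vs ! (Suc i mod m) = vs ! k" using chi_odd_red assms(3,5) ji by metis
      moreover have "Suc i mod m < m" using vs_ne by simp
      ultimately have "Suc i mod m = k" using nth_eq_iff_index_eq[OF dist] assms(4) by blast
      moreover have "i < m" using j ji by simp
      ultimately have "i = ?i0" using idx by blast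
      then show False using j ji by simp
    qed
  qed
  have "dd ww (2 * m) u v = chi (ww ?j0) (ww (Suc ?j0)) u v + (\<Sum>j\<in>{..<2 * m} - {?j0}. chi (ww j) (ww (Suc j)) u v)"
    unfolding dd_def using j0 by (simp add: sum.remove)
  also have "(\<Sum>j\<in>{..<2 * m} - {?j0}. chi (ww j) (ww (Suc j)) u v) = 0"
    by (rule sum.neutral) (use z in blast)
  also have "ww ?j0 = snd (ABm ?i0)" using i0 by (simp only: ww_odd mod_mod_trivial)
  also have "ww (Suc ?j0) = fst (ABm k)" using idx2[OF assms(4)] by (simp only: ww_odd2)
  finally show ?thesis by simp
qed

lemma cross_neq:
  assumes "k < m" "vs ! k = Red e"
  shows "snd (ABm ((k + m - 1) mod m)) \<noteq> fst (ABm k)"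
proof
  let ?i0 = "(k + m - 1) mod m"
  assume eq: "snd (ABm ?i0) = fst (ABm k)"
  have i0: "?i0 < m" using vs_ne by simp
  have g1: "good n h (vs ! ?i0) (Red e) (fst (ABm ?i0)) (snd (ABm ?i0))"
    using good_AB[OF i0] idx2[OF assms(1)] assms(2) by simp
  have g2: "good n h (Red e) (vs ! (Suc k mod m)) (fst (ABm k)) (snd (ABm k))"
    using good_AB[OF assms(1)] assms(2) by simp
  have "?i0 \<noteq> Suc k mod m"
  proof (cases "k = 0")
    case True
    then have "?i0 = m - 1" using vs_ne by simp
    moreover have "Suc k mod m = 1" using True m3 by simp
    ultimately show ?thesis using m3 by simp
  next
    case False
    then have "?i0 = k - 1" using assms(1) by (simp add: mod_if)
    moreover have "Suc k mod m = (if Suc k = m then 0 else Suc k)" using assms(1) by (simp add: mod_if)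
    ultimately show ?thesis using False m3 by auto
  qed
  then have "vs ! ?i0 \<noteq> vs ! (Suc k mod m)"
    using nth_eq_iff_index_eq[OF dist i0] mpos by simp
  then show False using good_pair_neq[OF shp g1[unfolded eq] g2] by blast
qed

lemma dd_in_sig:
  assumes "F \<in> flatspaces n h" "{u, v} \<in> sides F" "u \<noteq> v" "k < m" "vs ! k = Red {u, v}"
  shows "dd ww (2 * m) u v = sig (snd (ABm ((k + m - 1) mod m))) u v"
    "dd ww (2 * m) u v = - sig (fst (ABm k)) u v"
    "sig (fst (ABm k)) u v = 1 \<or> sig (fst (ABm k)) u v = -1"
proof -
  let ?i0 = "(k + m - 1) mod m"
  let ?B = "snd (ABm ?i0)" and ?A = "fst (ABm k)"
  have i0: "?i0 < m" using vs_ne by simp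
  have g1: "good n h (vs ! ?i0) (Red {u, v}) (fst (ABm ?i0)) ?B"
    using good_AB[OF i0] idx2[OF assms(4)] assms(5) by simp
  have g2: "good n h (Red {u, v}) (vs ! (Suc k mod m)) ?A (snd (ABm k))"
    using good_AB[OF assms(4)] assms(5) by simp
  have ne: "?B \<noteq> ?A" by (rule cross_neq[OF assms(4,5)])
  have s: "?B \<in> small_tris n" "?A \<in> small_tris n" using good_small[OF shp g1] good_small[OF shp g2] by auto
  have in1: "{u, v} \<subseteq> ?B" using good_red_y[OF g1] by blast
  have in2: "{u, v} \<subseteq> ?A" using good_red_x[OF g2] by blast
  have ad: "?B \<inter> ?A = {u, v} \<and> sig ?A u v = - sig ?B u v \<and> (sig ?B u v = 1 \<or> sig ?B u v = -1)"
    using adj[OF s ne assms(3)] in1 in2 by auto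
  have d: "dd ww (2 * m) u v = sig ?B u v"
    using dd_in[OF assms] ne ad by (simp add: chi_def)
  show "dd ww (2 * m) u v = sig ?B u v" by (rule d)
  show "dd ww (2 * m) u v = - sig ?A u v" using d ad by simp
  show "sig ?A u v = 1 \<or> sig ?A u v = -1" using ad by auto
qed

end


lemma good_y_red_rh:
  assumes "good n h x (Red e) B T" "{T} \<notin> flatspaces n h"
  shows "\<exists>e3. {B, T} \<in> flatspaces n h \<and> B \<noteq> T \<and> e3 \<in> sides {B, T}
        \<and> e3 \<subseteq> B \<and> e3 \<inter> e = {} \<and> x = Red e3"
  using assms unfolding good_def by auto

lemma good_x_red_rh:
  assumes "good n h (Red e) z T B" "{T} \<notin> flatspaces n h"
  shows "\<exists>e4. {T, B} \<in> flatspaces n h \<and> T \<noteq> B \<and> e4 \<in> sides {T, B}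
        \<and> e4 \<subseteq> B \<and> e \<inter> e4 = {} \<and> z = Red e4"
  using assms unfolding good_def by auto

context cyc begin

lemma rh_core:
  assumes R: "{T1, T2} \<in> flatspaces n h" "T1 \<noteq> T2" "T1 = {a1, o1, o2}" "T2 = {a2, o1, o2}"
    "distinct [a1, a2, o1, o2]" "sig T1 a1 o1 = sig T2 a2 o2"
    and k: "k < m" "vs ! k = Red {a1, o1}"
  shows "dd ww (2 * m) a1 o1 + dd ww (2 * m) a2 o2 = 0"
proof -
  let ?i0 = "(k + m - 1) mod m"
  let ?B = "snd (ABm ?i0)" and ?A = "fst (ABm k)"
  have i0: "?i0 < m" using vs_ne by simp
  have s1: "{a1, o1} \<in> sides {T1, T2}" using R(3,4,5) by (auto simp: sides_def)
  have s2: "{a2, o2} \<in> sides {T1, T2}" using R(3,4,5) by (auto simp: sides_def)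
  have g1: "good n h (vs ! ?i0) (Red {a1, o1}) (fst (ABm ?i0)) ?B"
    using good_AB[OF i0] idx2[OF k(1)] k(2) by simp
  have g2: "good n h (Red {a1, o1}) (vs ! (Suc k mod m)) ?A (snd (ABm k))"
    using good_AB[OF k(1)] k(2) by simp
  have ne: "?B \<noteq> ?A" by (rule cross_neq[OF k])
  have sm: "?B \<in> small_tris n" "?A \<in> small_tris n" using good_small[OF shp g1] good_small[OF shp g2] by auto
  have T1s: "T1 \<in> small_tris n" using fs_small R(1) by blast
  have in1: "{a1, o1} \<subseteq> ?B" using good_red_y[OF g1] by blast
  have in2: "{a1, o1} \<subseteq> ?A" using good_red_x[OF g2] by blast
  have ao: "a1 \<noteq> o1" using R(5) by simp
  have "T1 = ?B \<or> T1 = ?A"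
    using three_tris[OF sm T1s ne _ _ ao] in1 in2 R(3) by blast
  have d1a: "dd ww (2 * m) a1 o1 = sig ?B a1 o1" "dd ww (2 * m) a1 o1 = - sig ?A a1 o1"
    using dd_in_sig[OF R(1) s1 ao k] by auto
  have pick: "e4 = {a2, o2}" if "e4 \<subseteq> T2" "e4 \<inter> {a1, o1} = {}" "card e4 = 2" for e4
  proof -
    have "e4 \<subseteq> {a2, o2}" using that(1,2) R(4) by auto
    moreover have "card {a2, o2} = 2" using R(5) by simp
    ultimately show ?thesis using that(3) by (metis card_subset_eq finite.emptyI finite_insert)
  qed
  have no_tri: "{T1} \<notin> flatspaces n h"
  proof
    assume "{T1} \<in> flatspaces n h"
    then have "{T1} = {T1, T2}" using fs_unique[of "{T1}" n h "{T1, T2}" T1] R(1) by simp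
    then show False using R(2) by auto
  qed
  have ao2: "a2 \<noteq> o2" using R(5) by simp
  show ?thesis
  proof (cases "T1 = ?A")
    case True
    have "\<exists>e4. {T1, snd (ABm k)} \<in> flatspaces n h \<and> T1 \<noteq> snd (ABm k) \<and> e4 \<in> sides {T1, snd (ABm k)}
        \<and> e4 \<subseteq> snd (ABm k) \<and> {a1, o1} \<inter> e4 = {} \<and> vs ! (Suc k mod m) = Red e4"
      by (rule good_x_red_rh[OF g2[folded True] no_tri])
    then obtain e4 where e4: "{T1, snd (ABm k)} \<in> flatspaces n h" "T1 \<noteq> snd (ABm k)" "e4 \<in> sides {T1, snd (ABm k)}"
        "e4 \<subseteq> snd (ABm k)" "{a1, o1} \<inter> e4 = {}" "vs ! (Suc k mod m) = Red e4" by blast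
    have "{T1, snd (ABm k)} = {T1, T2}" using fs_unique[OF e4(1) R(1), of T1] by simp
    then have AT2: "snd (ABm k) = T2" using e4(2) by (auto simp: doubleton_eq_iff)
    have "e4 = {a2, o2}" using pick[of e4] e4(4,5) AT2 sides_card[OF e4(3)] by auto
    then have v2: "vs ! (Suc k mod m) = Red {a2, o2}" using e4(6) by simp
    have k2: "Suc k mod m < m" using vs_ne by simp
    have "k = (Suc k mod m + m - 1) mod m" using idx[OF k(1)] by simp
    then have "dd ww (2 * m) a2 o2 = sig (snd (ABm k)) a2 o2"
      using dd_in_sig(1)[OF R(1) s2 ao2 k2 v2] by simp
    then show ?thesis using d1a(2) True AT2 R(6) by simp
  next
    case False
    then have BT: "T1 = ?B" using \<open>T1 = ?B \<or> T1 = ?A\<close> by blast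
    have "\<exists>e3. {fst (ABm ?i0), T1} \<in> flatspaces n h \<and> fst (ABm ?i0) \<noteq> T1 \<and> e3 \<in> sides {fst (ABm ?i0), T1}
        \<and> e3 \<subseteq> fst (ABm ?i0) \<and> e3 \<inter> {a1, o1} = {} \<and> vs ! ?i0 = Red e3"
      by (rule good_y_red_rh[OF g1[folded BT] no_tri])
    then obtain e3 where e3: "{fst (ABm ?i0), T1} \<in> flatspaces n h" "fst (ABm ?i0) \<noteq> T1"
        "e3 \<in> sides {fst (ABm ?i0), T1}" "e3 \<subseteq> fst (ABm ?i0)" "e3 \<inter> {a1, o1} = {}" "vs ! ?i0 = Red e3" by blast
    have "{fst (ABm ?i0), T1} = {T1, T2}" using fs_unique[OF e3(1) R(1), of T1] by simp
    then have AT2: "fst (ABm ?i0) = T2" using e3(2) by (auto simp: doubleton_eq_iff)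
    have "e3 = {a2, o2}" using pick[of e3] e3(4,5) AT2 sides_card[OF e3(3)] by auto
    then have v2: "vs ! ?i0 = Red {a2, o2}" using e3(6) by simp
    have "dd ww (2 * m) a2 o2 = - sig (fst (ABm ?i0)) a2 o2"
      using dd_in_sig(2)[OF R(1) s2 ao2 i0 v2] by simp
    then show ?thesis using d1a(1) BT AT2 R(6) by simp
  qed
qed

lemma rh_zero:
  assumes R: "{T1, T2} \<in> flatspaces n h" "T1 \<noteq> T2" "T1 = {a1, o1, o2}" "T2 = {a2, o1, o2}"
    "distinct [a1, a2, o1, o2]" "sig T1 a1 o1 = sig T2 a2 o2"
  shows "dd ww (2 * m) a1 o1 + dd ww (2 * m) a2 o2 = 0"
proof (cases "Red {a1, o1} \<in> set vs")
  case True
  then obtain k where "k < m" "vs ! k = Red {a1, o1}" by (metis in_set_conv_nth)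
  then show ?thesis using rh_core[OF R] by blast
next
  case F1: False
  show ?thesis
  proof (cases "Red {a2, o2} \<in> set vs")
    case True
    then obtain k where k: "k < m" "vs ! k = Red {a2, o2}" by (metis in_set_conv_nth)
    have R': "{T2, T1} \<in> flatspaces n h" "T2 \<noteq> T1" "T2 = {a2, o2, o1}" "T1 = {a1, o2, o1}"
      "distinct [a2, a1, o2, o1]" "sig T2 a2 o2 = sig T1 a1 o1"
      using R by (auto simp: insert_commute)
    show ?thesis using rh_core[OF R' k] by simp
  next
    case False
    have s1: "{a1, o1} \<in> sides {T1, T2}" using R(3,4,5) by (auto simp: sides_def)
    have s2: "{a2, o2} \<in> sides {T1, T2}" using R(3,4,5) by (auto simp: sides_def)
    show ?thesis using dd_not_in[OF R(1) s1 _ F1] dd_not_in[OF R(1) s2 _ False] R(5) by simp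
  qed
qed

lemma red_exists: "\<exists>k e. k < m \<and> vs ! k = Red e"
proof (cases "vs ! 0")
  case (Red e) then show ?thesis using mpos by blast
next
  case (Blue T)
  have "good n h (vs ! 0) (vs ! (Suc 0 mod m)) (fst (ABm 0)) (snd (ABm 0))" using good_AB mpos by blast
  then obtain e where "vs ! (Suc 0 mod m) = Red e" using Blue unfolding good_def by auto
  moreover have "Suc 0 mod m < m" by (rule mod_less_divisor, rule mpos)
  ultimately show ?thesis by blast
qed

lemma ff_nonzero: "\<exists>x. ff n ww (2 * m) x \<noteq> 0"
proof -
  obtain k e where k: "k < m" "vs ! k = Red e" using red_exists by blast
  have g: "good n h (Red e) (vs ! (Suc k mod m)) (fst (ABm k)) (snd (ABm k))"
    using good_AB[OF k(1)] k(2) by simp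
  obtain F where F: "F \<in> flatspaces n h" "e \<in> sides F" using g unfolding good_def by blast
  obtain u v where uv: "e = {u, v}" "u \<noteq> v" using sides_card[OF F(2)] by (auto simp: card_2_iff)
  have d: "dd ww (2 * m) u v = - sig (fst (ABm k)) u v" "sig (fst (ABm k)) u v = 1 \<or> sig (fst (ABm k)) u v = -1"
    using dd_in_sig[OF F(1) _ uv(2) k(1)] F(2) k(2) uv(1) by auto
  have sA: "fst (ABm k) \<in> small_tris n" using good_small[OF shp g] by blast
  have "e \<subseteq> fst (ABm k)" using good_red_x[OF g] by blast
  then have "ff n ww (2 * m) v - ff n ww (2 * m) u = dd ww (2 * m) u v"
    using ff_exact[OF walk sA] uv(1) by blast
  then have "ff n ww (2 * m) v \<noteq> ff n ww (2 * m) u" using d by auto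
  then show ?thesis by metis
qed

end


lemma flat_to_fs:
  assumes shp: "shapes_ok n h" and fa: "flat_adj n h T1 T2" and ne: "T1 \<noteq> T2"
  shows "{T1, T2} \<in> flatspaces n h"
proof -
  have s1: "T1 \<in> small_tris n" using fa by (simp add: flat_adj_def)
  let ?F = "{T'. (T1, T') \<in> (FR n h)\<^sup>*}"
  have F: "?F \<in> flatspaces n h" by (rule fs_mem[OF s1])
  have t1: "T1 \<in> ?F" by simp
  have t2: "T2 \<in> ?F" using fs_adj[OF fa F t1] .
  have "is_small_triangle n ?F \<or> is_small_rhombus n ?F" using shp F unfolding shapes_ok_def by blast
  then have "?F = {T1, T2}"
  proof
    assume "is_small_triangle n ?F"
    then obtain T where "?F = {T}" by (auto simp: is_small_triangle_def)
    then show ?thesis using t1 t2 ne by auto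
  next
    assume "is_small_rhombus n ?F"
    then obtain X Y where XY: "?F = {X, Y}" by (auto simp: is_small_rhombus_def)
    then show ?thesis using t1 t2 ne by (auto simp: doubleton_eq_iff)
  qed
  then show ?thesis using F by simp
qed

context cyc begin

lemma flat_f:
  assumes T1s: "{a1, o1, o2} \<in> small_tris n" and T2s: "{a2, o1, o2} \<in> small_tris n"
    and d: "distinct [a1, a2, o1, o2]" and sg: "det3 a1 o1 o2 = det3 a2 o2 o1"
    and hf: "h o1 + h o2 = h a1 + h a2"
  shows "ff n ww (2 * m) o1 + ff n ww (2 * m) o2 = ff n ww (2 * m) a1 + ff n ww (2 * m) a2"
proof -
  let ?T1 = "{a1, o1, o2}" and ?T2 = "{a2, o1, o2}"
  have i: "?T1 \<inter> ?T2 = {o1, o2}" using d by auto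
  have u: "(?T1 \<union> ?T2) - (?T1 \<inter> ?T2) = {a1, a2}" using d by auto
  have ne: "?T1 \<noteq> ?T2" using d by auto
  have s1: "sum h (?T1 \<inter> ?T2) = h o1 + h o2" unfolding i using d by simp
  have s2: "sum h ((?T1 \<union> ?T2) - (?T1 \<inter> ?T2)) = h a1 + h a2" unfolding u using d by simp
  have "card (?T1 \<inter> ?T2) = 2" unfolding i using d by simp
  then have "flat_adj n h ?T1 ?T2"
    unfolding flat_adj_def using T1s T2s hf s1 s2 by simp
  then have fs: "{?T1, ?T2} \<in> flatspaces n h" using flat_to_fs[OF shp _ ne] by blast
  have sg': "sig ?T1 a1 o1 = sig ?T2 a2 o2"
  proof -
    have "sig ?T1 a1 o1 = det3 a1 o1 o2" using d by (intro sig_tri) auto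
    moreover have "?T2 = {a2, o2, o1}" by auto
    then have "sig ?T2 a2 o2 = det3 a2 o2 o1" using d sig_tri[of a2 o2 o1] by auto
    ultimately show ?thesis using sg by simp
  qed
  have z: "dd ww (2 * m) a1 o1 + dd ww (2 * m) a2 o2 = 0"
    by (rule rh_zero[OF fs ne refl refl d sg'])
  have e1: "ff n ww (2 * m) o1 - ff n ww (2 * m) a1 = dd ww (2 * m) a1 o1"
    by (rule ff_exact[OF walk T1s]) auto
  have e2: "ff n ww (2 * m) o2 - ff n ww (2 * m) a2 = dd ww (2 * m) a2 o2"
    by (rule ff_exact[OF walk T2s]) auto
  show ?thesis using z e1 e2 by linarith
qed

lemma flat1:
  assumes "p + q + 2 \<le> n" "h (Suc p, q) + h (p, Suc q) = h (p, q) + h (Suc p, Suc q)"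
  shows "ff n ww (2 * m) (Suc p, q) + ff n ww (2 * m) (p, Suc q)
       = ff n ww (2 * m) (p, q) + ff n ww (2 * m) (Suc p, Suc q)"
proof (rule flat_f)
  show "{(p, q), (Suc p, q), (p, Suc q)} \<in> small_tris n" using up_in[of p q n] assms(1) by (simp add: up_eq)
  have "{(Suc p, Suc q), (Suc p, q), (p, Suc q)} = down_tri p q" by (auto simp: down_tri_def)
  then show "{(Suc p, Suc q), (Suc p, q), (p, Suc q)} \<in> small_tris n" using down_in[of p q n] assms(1) by simp
qed (use assms(2) in \<open>auto simp: det3_def\<close>)

lemma flat2:
  assumes "p + q + 2 \<le> n" "h (Suc p, q) + h (Suc p, Suc q) = h (p, Suc q) + h (Suc (Suc p), q)"
  shows "ff n ww (2 * m) (Suc p, q) + ff n ww (2 * m) (Suc p, Suc q)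
       = ff n ww (2 * m) (p, Suc q) + ff n ww (2 * m) (Suc (Suc p), q)"
proof (rule flat_f)
  have "{(p, Suc q), (Suc p, q), (Suc p, Suc q)} = down_tri p q" by (auto simp: down_tri_def)
  then show "{(p, Suc q), (Suc p, q), (Suc p, Suc q)} \<in> small_tris n" using down_in[of p q n] assms(1) by simp
  have "{(Suc (Suc p), q), (Suc p, q), (Suc p, Suc q)} = up_tri (Suc p) q" by (auto simp: up_tri_def)
  then show "{(Suc (Suc p), q), (Suc p, q), (Suc p, Suc q)} \<in> small_tris n" using up_in[of "Suc p" q n] assms(1) by simp
qed (use assms(2) in \<open>auto simp: det3_def\<close>)

lemma flat3:
  assumes "p + q + 2 \<le> n" "h (p, Suc q) + h (Suc p, Suc q) = h (Suc p, q) + h (p, Suc (Suc q))"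
  shows "ff n ww (2 * m) (p, Suc q) + ff n ww (2 * m) (Suc p, Suc q)
       = ff n ww (2 * m) (Suc p, q) + ff n ww (2 * m) (p, Suc (Suc q))"
proof (rule flat_f)
  have "{(Suc p, q), (p, Suc q), (Suc p, Suc q)} = down_tri p q" by (auto simp: down_tri_def)
  then show "{(Suc p, q), (p, Suc q), (Suc p, Suc q)} \<in> small_tris n" using down_in[of p q n] assms(1) by simp
  have "{(p, Suc (Suc q)), (p, Suc q), (Suc p, Suc q)} = up_tri p (Suc q)" by (auto simp: up_tri_def)
  then show "{(p, Suc (Suc q)), (p, Suc q), (Suc p, Suc q)} \<in> small_tris n" using up_in[of p "Suc q" n] assms(1) by simp
qed (use assms(2) in \<open>auto simp: det3_def\<close>)

end


lemma eps_ex: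
  fixes s c :: "'a \<Rightarrow> real"
  assumes "finite I" "\<forall>i\<in>I. 0 \<le> s i \<and> (s i = 0 \<longrightarrow> c i = 0)"
  shows "\<exists>\<epsilon>>0. \<forall>i\<in>I. \<epsilon> * \<bar>c i\<bar> \<le> s i"
  using assms
proof (induction I rule: finite_induct)
  case empty
  have "(1::real) > 0 \<and> (\<forall>i\<in>{}. 1 * \<bar>c i\<bar> \<le> s i)" by simp
  then show ?case by blast
next
  case (insert j I)
  then obtain e1 where e1: "e1 > 0" "\<forall>i\<in>I. e1 * \<bar>c i\<bar> \<le> s i" by auto
  have sj: "0 \<le> s j" "s j = 0 \<longrightarrow> c j = 0" using insert.prems by auto
  obtain e2 where e2: "e2 > 0" "e2 * \<bar>c j\<bar> \<le> s j"
  proof (cases "c j = 0")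
    case True then show ?thesis using that[of 1] sj by simp
  next
    case False
    then have "s j > 0" using sj by auto
    then show ?thesis using that[of "s j / \<bar>c j\<bar>"] False by simp
  qed
  let ?e = "min e1 e2"
  have "\<forall>i\<in>insert j I. ?e * \<bar>c i\<bar> \<le> s i"
  proof
    fix i assume "i \<in> insert j I"
    then show "?e * \<bar>c i\<bar> \<le> s i"
    proof
      assume "i = j"
      have "?e * \<bar>c i\<bar> \<le> e2 * \<bar>c i\<bar>" by (intro mult_right_mono) auto
      then show ?thesis using e2 \<open>i = j\<close> by simp
    next
      assume "i \<in> I"
      have "?e * \<bar>c i\<bar> \<le> e1 * \<bar>c i\<bar>" by (intro mult_right_mono) auto
      then show ?thesis using e1 \<open>i \<in> I\<close> by fastforce
    qed
  qed
  then show ?case using e1 e2 by (intro exI[of _ ?e]) simp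
qed

definition slk :: "(nat \<times> nat \<Rightarrow> real) \<Rightarrow> nat \<times> nat \<times> nat \<Rightarrow> real" where
  "slk g i = (case i of (p, q, k) \<Rightarrow>
     if k = 0 then g (Suc p, q) + g (p, Suc q) - g (p, q) - g (Suc p, Suc q)
     else if k = 1 then g (Suc p, q) + g (Suc p, Suc q) - g (p, Suc q) - g (Suc (Suc p), q)
     else g (p, Suc q) + g (Suc p, Suc q) - g (Suc p, q) - g (p, Suc (Suc q)))"

definition idxs :: "nat \<Rightarrow> (nat \<times> nat \<times> nat) set" where
  "idxs n = {(p, q, k). p + q + 2 \<le> n \<and> k < 3}"

lemma idxs_finite: "finite (idxs n)"
proof -
  have "idxs n \<subseteq> {..n} \<times> {..n} \<times> {..<3}" by (auto simp: idxs_def)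
  then show ?thesis by (rule finite_subset) auto
qed

lemma hive_slk: "is_hive n g \<longleftrightarrow> (\<forall>i\<in>idxs n. 0 \<le> slk g i)"
proof
  assume hv: "is_hive n g"
  show "\<forall>i\<in>idxs n. 0 \<le> slk g i"
  proof
    fix i assume i: "i \<in> idxs n"
    obtain p q k where pqk: "i = (p, q, k)" by (cases i) auto
    then have pq: "p + q + 2 \<le> n" "k < 3" using i by (auto simp: idxs_def)
    have H: "g (p + 1, q) + g (p, q + 1) \<ge> g (p, q) + g (p + 1, q + 1)"
      "g (p + 1, q) + g (p + 1, q + 1) \<ge> g (p, q + 1) + g (p + 2, q)"
      "g (p, q + 1) + g (p + 1, q + 1) \<ge> g (p + 1, q) + g (p, q + 2)"
      using hv pq(1) unfolding is_hive_def by blast+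
    have "k = 0 \<or> k = 1 \<or> k = 2" using pq(2) by auto
    then show "0 \<le> slk g i" using H pqk by (auto simp: slk_def numeral_2_eq_2)
  qed
next
  assume a: "\<forall>i\<in>idxs n. 0 \<le> slk g i"
  show "is_hive n g" unfolding is_hive_def
  proof (intro allI impI conjI)
    fix p q assume pq: "p + q + 2 \<le> n"
    have "(p, q, 0) \<in> idxs n" "(p, q, 1) \<in> idxs n" "(p, q, 2) \<in> idxs n" using pq by (auto simp: idxs_def)
    then have "0 \<le> slk g (p, q, 0)" "0 \<le> slk g (p, q, 1)" "0 \<le> slk g (p, q, 2)" using a by blast+
    then show "g (p + 1, q) + g (p, q + 1) \<ge> g (p, q) + g (p + 1, q + 1)"
      "g (p + 1, q) + g (p + 1, q + 1) \<ge> g (p, q + 1) + g (p + 2, q)"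
      "g (p, q + 1) + g (p + 1, q + 1) \<ge> g (p + 1, q) + g (p, q + 2)"
      by (auto simp: slk_def numeral_2_eq_2)
  qed
qed

lemma slk_lin: "slk (\<lambda>x. g x + t * f x) i = slk g i + t * slk f i"
  by (cases i) (auto simp: slk_def algebra_simps)

theorem lemma3p1:
  fixes n :: nat and h :: "nat \<times> nat \<Rightarrow> real"
  assumes "n \<ge> 1"
    and "is_hive n h"
    and "\<forall>F\<in>flatspaces n h. is_small_triangle n F \<or> is_small_rhombus n F"
    and "extreme_point_fun h (hives_with_border n h)"
  shows "acyclic_graph (assoc_graph_edges n h)"
proof (rule ccontr)
  assume "\<not> acyclic_graph (assoc_graph_edges n h)"
  then obtain vs where cyv: "is_cycle (assoc_graph_edges n h) vs" by (auto simp: acyclic_graph_def)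
  have shp: "shapes_ok n h" using assms(3) by (simp add: shapes_ok_def)
  interpret C: cyc n h vs by (rule cyc.intro[OF shp cyv])
  define f where "f = ff n C.ww (2 * C.m)"
  have hS: "h \<in> hives_with_border n h" using assms(4) by (simp add: extreme_point_fun_def)
  have flat: "slk h i = 0 \<longrightarrow> slk f i = 0" if "i \<in> idxs n" for i
  proof -
    obtain p q k where i0: "i = (p, q, k)" by (cases i) auto
    then have i: "i = (p, q, k)" "p + q + 2 \<le> n" "k < 3" using that by (auto simp: idxs_def)
    have "k = 0 \<or> k = 1 \<or> k = 2" using i(3) by auto
    then show ?thesis
    proof (elim disjE)
      assume "k = 0" then show ?thesis using C.flat1[OF i(2)] i(1) by (auto simp: slk_def f_def)
    next
      assume "k = 1" then show ?thesis using C.flat2[OF i(2)] i(1) by (auto simp: slk_def f_def)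
    next
      assume "k = 2" then show ?thesis using C.flat3[OF i(2)] i(1) by (auto simp: slk_def f_def)
    qed
  qed
  have nonneg: "0 \<le> slk h i" if "i \<in> idxs n" for i using assms(2) hive_slk that by blast
  obtain e where e: "e > 0" "\<forall>i\<in>idxs n. e * \<bar>slk f i\<bar> \<le> slk h i"
    using eps_ex[where s="slk h" and c="slk f", OF idxs_finite] flat nonneg by blast
  have mem: "(\<lambda>x. h x + t * f x) \<in> hives_with_border n h" if t: "\<bar>t\<bar> \<le> e" for t
  proof -
    have "is_hive n (\<lambda>x. h x + t * f x)" unfolding hive_slk slk_lin
    proof
      fix i assume i: "i \<in> idxs n"
      have "\<bar>t * slk f i\<bar> \<le> e * \<bar>slk f i\<bar>" unfolding abs_mult by (intro mult_right_mono t) simp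
      then show "0 \<le> slk h i + t * slk f i" using e(2) i by fastforce
    qed
    moreover have "\<forall>x\<in>hive_border n. h x + t * f x = h x"
      using ff_border[OF C.walk] by (simp add: f_def)
    moreover have "\<forall>x. x \<notin> hive_vertices n \<longrightarrow> h x + t * f x = 0"
      using hS ff_out by (simp add: hives_with_border_def f_def)
    ultimately show ?thesis by (simp add: hives_with_border_def)
  qed
  let ?a = "\<lambda>x. h x + (- e) * f x" and ?b = "\<lambda>x. h x + e * f x"
  have aS: "?a \<in> hives_with_border n h" using mem[of "- e"] e(1) by simp
  have bS: "?b \<in> hives_with_border n h" using mem[of e] e(1) by simp
  obtain x where x: "f x \<noteq> 0" using C.ff_nonzero by (auto simp: f_def)
  have neq: "?a \<noteq> ?b"
  proof
    assume ab: "?a = ?b"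
    have "?a x = ?b x" using fun_cong[OF ab, of x] by simp
    then show False using x e(1) by simp
  qed
  have ex: "\<And>a b t. a \<in> hives_with_border n h \<Longrightarrow> b \<in> hives_with_border n h \<Longrightarrow> a \<noteq> b \<Longrightarrow> 0 < t \<Longrightarrow> t < 1
      \<Longrightarrow> h \<noteq> (\<lambda>i. (1 - t) * a i + t * b i)"
    using assms(4) unfolding extreme_point_fun_def by blast
  have "h \<noteq> (\<lambda>i. (1 - 1/2) * ?a i + 1/2 * ?b i)" by (rule ex[OF aS bS neq]) simp_all
  moreover have "h = (\<lambda>i. (1 - 1/2) * ?a i + 1/2 * ?b i)" by (rule ext) (simp add: algebra_simps)
  ultimately show False by blast
qed


end
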